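(* Let $\mathrm{SNR}>0$, $C=\frac12\log(1+\mathrm{SNR})$, $R_{\mathrm{crit}}<R<C$, and $\theta=\theta(R)$. Define $$\beta^*=\frac{\cos^2\theta}{2}+\frac{\cos^2\theta}{2}\sqrt{1+\frac{4}{\mathrm{SNR}\cos^2\theta}}-1,\qquad r(\beta)=(1+\beta)\tan\theta.$$ Then $$\frac{\mathrm{SNR}\,(\beta^* )^2}{2}+E_h\big(r(\beta^* )^2\,\mathrm{SNR}\big)=E_{\mathrm{sp}}(R;\mathrm{SNR}).$$
   Context: Logarithms are natural. $\theta(R)\in(0,\pi/2]$ is defined by $\sin\theta(R)=e^{-R}$. $E_h(\mu)=\frac12(\mu-1-\log\mu)$ if $\mu\ge1$ and $E_h(\mu)=0$ otherwise. $R_{\mathrm{crit}}=\frac12\log\Big(\frac12+\frac{\mathrm{SNR}}4+\frac12\sqrt{1+\frac{\mathrm{SNR}^2}{4}}\Big)$. $E_{\mathrm{sp}}(R;\mathrm{SNR})=E_G(\beta_G,\rho_G)$ with $E_G(\beta,\rho)=\frac12\big[(1-\beta)(1+\rho)+\mathrm{SNR}+\rho\log\beta+\log(\beta-\frac{\mathrm{SNR}}{1+\rho})-2\rho R\big]$, $\beta_G=e^{2R}$, $\rho_G=\frac{\mathrm{SNR}}{2\beta_G}\Big(1+\sqrt{1+\frac{4\beta_G}{\mathrm{SNR}(\beta_G-1)}}\Big)-1$. *)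

theory Defs
  imports "HOL-Analysis.Analysis"
begin

definition theta :: "real \<Rightarrow> real" where
  "theta R = arcsin (exp (- R))"

definition E_h :: "real \<Rightarrow> real" where
  "E_h \<mu> = (if \<mu> \<ge> 1 then (\<mu> - 1 - ln \<mu>) / 2 else 0)"

definition R_crit :: "real \<Rightarrow> real" where
  "R_crit SNR = ln (1/2 + SNR/4 + sqrt (1 + SNR\<^sup>2 / 4) / 2) / 2"

definition capacity :: "real \<Rightarrow> real" where
  "capacity SNR = ln (1 + SNR) / 2"

definition E_G :: "real \<Rightarrow> real \<Rightarrow> real \<Rightarrow> real \<Rightarrow> real" where
  "E_G SNR R \<beta> \<rho> = ((1 - \<beta>) * (1 + \<rho>) + SNR + \<rho> * ln \<beta>
      + ln (\<beta> - SNR / (1 + \<rho>)) - 2 * \<rho> * R) / 2"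

definition beta_G :: "real \<Rightarrow> real" where
  "beta_G R = exp (2 * R)"

definition rho_G :: "real \<Rightarrow> real \<Rightarrow> real" where
  "rho_G SNR R = SNR / (2 * beta_G R) *
     (1 + sqrt (1 + 4 * beta_G R / (SNR * (beta_G R - 1)))) - 1"

definition E_sp :: "real \<Rightarrow> real \<Rightarrow> real" where
  "E_sp R SNR = E_G SNR R (beta_G R) (rho_G SNR R)"

end

theory Submission
  imports Defs
begin

lemma core:
  fixes S q a w u y B :: real
  assumes S: "S>0" and q: "0<q" "q<1" and a: "a = 1-q" and w: "w \<ge> 0" "w^2 = 1+4/(S*a)"
    and u: "u = a/2*(1+w)" and y: "y = S*q*u/a" and B: "B*q = 1" and C: "q*(1+S) > 1"
  shows "u*y \<ge> 1" "B - S/y = 1/(u*y)" "S*(u-1)^2 + u*y - 1 = (1-B)*y + S"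
proof -
  have a0: "a>0" using a q by simp
  have upos: "u > 0" unfolding u using a0 w(1) by (intro mult_pos_pos) auto
  have vpos: "y > 0" using y S q a0 upos by simp
  have w2: "S*a*w^2 = S*a + 4" using w(2) S a0 by (simp add: field_simps)
  have quad: "S*u^2 - S*a*u - a = 0"
  proof -
    have "4*(S*u^2 - S*a*u - a) = a*(S*a*w^2 - S*a - 4)"
      unfolding u power2_eq_square by (simp add: field_simps)
    thus ?thesis using w2 by simp
  qed
  have uv: "u*y = S*q*u^2/a" using y by (simp add: power2_eq_square)
  show "B - S/y = 1/(u*y)"
  proof -
    have Bq: "B = 1/q" using B q by (simp add: field_simps)
    show ?thesis unfolding Bq y using quad q a0 upos S
      by (simp add: field_simps power2_eq_square) (drule arg_cong[where f="\<lambda>t. q*u*t"], simp add: algebra_simps)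
  qed
  show "S*(u-1)^2 + u*y - 1 = (1-B)*y + S"
  proof -
    have Bq: "B = 1/q" using B q by (simp add: field_simps)
    have "S*u^2 - S*u + S*q*u^2/a - 1 = 0"
    proof -
      have "a*(S*u^2 - S*u + S*q*u^2/a - 1) = S*u^2*(a+q) - S*a*u - a"
        using a0 by (simp add: field_simps)
      also have "\<dots> = 0" using quad a by simp
      finally show ?thesis using a0 by simp
    qed
    moreover have "(1-B)*y = - S*u"
    proof -
      have "(1-B)*y = S*u*(q-1)/a" unfolding Bq y using q a0 by (simp add: field_simps)
      also have "q - 1 = -a" using a by simp
      finally show ?thesis using a0 by simp
    qed
    ultimately show ?thesis unfolding uv by (simp add: power2_eq_square algebra_simps)
  qed
  show "u*y \<ge> 1"
  proof -
    have key: "S*q*(1+w) \<ge> 2"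
    proof (cases "2/(S*q) - 1 \<le> 0")
      case True
      hence "2/(S*q) \<le> 1" by simp
      hence "2 \<le> S*q" using S q by (simp add: field_simps)
      moreover have "S*q*w \<ge> 0" using w S q by simp
      ultimately show ?thesis by (simp add: algebra_simps)
    next
      case False
      have "(2/(S*q) - 1)^2 \<le> w^2"
      proof -
        have "(2/(S*q) - 1)^2 = 4/(S*q)^2 - 4/(S*q) + 1"
          using S q by (simp add: power2_eq_square field_simps)
        also have "\<dots> \<le> 1 + 4/(S*a)"
        proof -
          have "4/(S*q)^2 - 4/(S*q) = 4*(1 - S*q)/(S^2*q^2)"
            using S q by (simp add: power2_eq_square field_simps)
          also have "\<dots> \<le> 4/(S*a)"
          proof -
            have d: "S^2*q^2 - (1-S*q)*(S*a) = S*(q*(1+S) - 1)"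
              unfolding a by (simp add: power2_eq_square algebra_simps)
            have "S*(q*(1+S) - 1) > 0" using C S by simp
            hence "(1 - S*q)*(S*a) \<le> S^2*q^2" using d by linarith
            hence "1 - S*q \<le> S^2*q^2/(S*a)"
              using S a0 by (subst pos_le_divide_eq) auto
            hence "1 - S*q \<le> 1/(S*a) * (S^2*q^2)" by simp
            hence "(1 - S*q)/(S^2*q^2) \<le> 1/(S*a)"
              using S q by (subst pos_divide_le_eq) auto
            hence "4*((1 - S*q)/(S^2*q^2)) \<le> 4*(1/(S*a))" by linarith
            thus ?thesis by (simp only: times_divide_eq_right mult_1_right)
          qed
          finally show ?thesis by simp
        qed
        finally show ?thesis using w by simp
      qed
      hence "2/(S*q) - 1 \<le> w" using w(1) by (rule power2_le_imp_le)
      hence "2/(S*q) \<le> 1 + w" by simp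
      hence "2 \<le> (1+w)*(S*q)" using S q by (subst (asm) pos_divide_le_eq) auto
      thus ?thesis by (simp add: algebra_simps)
    qed
    have "u*y = S*q*u*u/a" using y by simp
    also have "\<dots> = u * (S*q*(1+w)/2)" unfolding u using a0 by (simp add: field_simps)
    finally have e: "u*y = u*(S*q*(1+w)/2)" .
    have "u*y = q*(S*u^2)/a" unfolding uv by simp
    also have "S*u^2 = S*a*u + a" using quad by simp
    also have "q*(S*a*u + a)/a = q*(S*u+1)" using a0 by (simp add: field_simps)
    finally have "u*y = q*(S*u+1)" .
    moreover have "S*u \<ge> a/q"
    proof -
      have "S*u = a*(S*(1+w)/2)" unfolding u by (simp add: field_simps)
      moreover have "S*(1+w)/2 \<ge> 1/q" using key q by (simp add: field_simps)
      moreover have "a*(1/q) \<le> a*(S*(1+w)/2)" by (rule mult_left_mono) (use calculation a0 in auto)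
      ultimately have "S*u \<ge> a*(1/q)" by linarith
      thus ?thesis by simp
    qed
    hence "q*(S*u) \<ge> a" using q by (simp add: field_simps)
    ultimately show ?thesis using a by (simp add: algebra_simps)
  qed
qed

theorem mainTheorem3:
  fixes SNR R :: real
  assumes "SNR > 0"
    and "R_crit SNR < R" and "R < capacity SNR"
  shows "let \<theta> = theta R;
             c2 = (cos \<theta>)\<^sup>2;
             \<beta>s = c2 / 2 + c2 / 2 * sqrt (1 + 4 / (SNR * c2)) - 1;
             r = (\<lambda>\<beta>. (1 + \<beta>) * tan \<theta>)
         in SNR * \<beta>s\<^sup>2 / 2 + E_h ((r \<beta>s)\<^sup>2 * SNR) = E_sp R SNR"
proof -
  define S where "S = SNR"
  have S: "S > 0" using assms(1) S_def by simp
  have Rc: "R_crit SNR > 0"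
  proof -
    have "sqrt (1 + SNR\<^sup>2 / 4) \<ge> 1" by simp
    hence "1/2 + SNR/4 + sqrt (1 + SNR\<^sup>2 / 4) / 2 > 1" using assms(1) by linarith
    thus ?thesis unfolding R_crit_def by simp
  qed
  have R0: "R > 0" using Rc assms(2) by simp
  define q where "q = exp (-R) ^ 2"
  define B where "B = beta_G R"
  have e1: "exp (-R) < 1" using R0 by simp
  have e0: "exp (-R) > 0" by simp
  have q0: "0 < q" unfolding q_def by simp
  have q1: "q < 1" unfolding q_def using e1 e0
    by (simp add: power_less_one_iff)
  have Bq: "B*q = 1" unfolding B_def beta_G_def q_def
    by (simp add: power2_eq_square flip: exp_add)
  define a where "a = 1 - q"
  have a0: "a > 0" using q1 a_def by simp
  have sinth: "sin (theta R) = exp (-R)" unfolding theta_def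
    using e1 e0 by (intro sin_arcsin) linarith+
  have c2: "(cos (theta R))^2 = a" unfolding a_def q_def
    using sinth by (simp add: cos_squared_eq)
  have tan2: "(tan (theta R))^2 = q/a" unfolding tan_def power_divide c2 sinth q_def by simp
  define w where "w = sqrt (1 + 4/(S*a))"
  have w0: "w \<ge> 0" unfolding w_def using S a0 by simp
  have w2: "w^2 = 1 + 4/(S*a)" unfolding w_def using S a0 by simp
  define u where "u = a/2*(1+w)"
  define y where "y = S*q*u/a"
  have C: "q*(1+S) > 1"
  proof -
    have "2*R < ln (1+S)" using assms(3) unfolding capacity_def S_def by simp
    hence "exp (2*R) < 1+S" using S by (metis exp_less_cancel_iff exp_ln add_pos_pos zero_less_one)
    hence "B < 1+S" unfolding B_def beta_G_def .
    hence "B*q < (1+S)*q" using q0 by simp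
    thus ?thesis using Bq by (simp add: algebra_simps)
  qed
  note cr = core[OF S q0 q1 a_def w0 w2 u_def y_def Bq C]
  have bs: "a / 2 + a / 2 * sqrt (1 + 4 / (SNR * a)) - 1 = u - 1"
    unfolding u_def w_def S_def by (simp add: algebra_simps)
  have mu: "((1 + (u - 1)) * tan (theta R))\<^sup>2 * SNR = u*y"
    unfolding y_def S_def power_mult_distrib tan2 by (simp add: power2_eq_square)
  have rho: "rho_G SNR R = y - 1"
  proof -
    have Bv: "B = 1/q" using Bq q0 by (simp add: field_simps)
    have "4 * B / (S * (B - 1)) = 4/(S*a)" unfolding Bv a_def using q0 q1 S
      by (simp add: field_simps)
    hence "rho_G SNR R = S/(2*B)*(1+w) - 1" unfolding rho_G_def w_def S_def B_def by simp
    also have "S/(2*B)*(1+w) = y" unfolding Bv y_def u_def using a0 by (simp add: field_simps)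
    finally show ?thesis .
  qed
  have rhoS: "rho_G S R = y - 1" using rho S_def by simp
  have lnB: "ln B = 2*R" unfolding B_def beta_G_def by simp
  have uy0: "u*y > 0" using cr(1) by simp
  have lnmu: "ln (B - S/y) = - ln (u*y)" unfolding cr(2) using ln_inverse[of "u*y"] by (simp add: inverse_eq_divide)
  have y1: "1 + (y - 1) = y" by simp
  have Esp: "E_sp R SNR = ((1 - B) * y + S - ln (u*y)) / 2"
  proof -
    have "E_sp R SNR = ((1 - B) * y + S + (y - 1) * (2*R) + ln (B - S/y) - 2 * (y - 1) * R) / 2"
      unfolding E_sp_def E_G_def S_def[symmetric] rhoS B_def[symmetric] lnB y1 by simp
    thus ?thesis unfolding lnmu by (simp add: algebra_simps)
  qed
  have Eh: "E_h (u*y) = (u*y - 1 - ln (u*y))/2" unfolding E_h_def using cr(1) by simp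
  have fin: "S * (u - 1)\<^sup>2 / 2 + (u*y - 1 - ln (u*y))/2 = ((1 - B) * y + S - ln (u*y)) / 2"
    using cr(3) by (simp add: field_simps)
  show ?thesis
    apply (unfold Let_def c2)
    apply (unfold bs)
    apply (unfold mu)
    using fin unfolding Esp Eh S_def by simp
qed

end
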